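(* Let $X$ be a completely regular Hausdorff space and let $A(X)$ be an adequate subspace of $C(X)$. Then $\hat{A}_b(X)=\{\hat f: f\in A_b(X)\}$ is a subspace of $C(\mathcal{A}X)$ that precisely separates points from closed sets in $\mathcal{A}X$.
   Context: All functions are real-valued; $C(X)$ is the continuous real functions on $X$, $1_X$ the constant $1$. A subspace $A(Z)\subseteq C(Z)$ separates points from closed sets if for every $z\in Z$ and closed $F\subseteq Z$ with $z\notin F$ there is $f\in A(Z)$ with $f(z)=1$ and $f=0$ on $F$; it does so precisely if such $f$ can always be chosen with values in $[0,1]$. $A(X)$ is adequate if (a) it separates points from closed sets and contains the constant functions; (b) there is a continuous nondecreasing $g:\mathbb{R}\to\mathbb{R}$ with $g(t)=0$ for $t\le0$, $g(t)=1$ for $t\ge1$, and $g\circ f\in A(X)$ for all $f\in A(X)$; (c) every $f\in A(X)$ is $f_1-f_2$ with $f_1,f_2\in A(X)$ nonnegative. The $A(X)$-compactification $\mathcal{A}X$ is the closure of the image of the embedding $i:X\to[-\infty,\infty]^{A(X)}$, $i(x)(\varphi)=\varphi(x)$, in the product of copies of $[-\infty,\infty]$ (order topology); $X$ is identified with $i(X)$. For $f\in A(X)$, $\hat f:\mathcal{A}X\to[-\infty,\infty]$, $\hat f(x)=x(f)$, is the continuous extension of $f$. $A_b(X)$ denotes the bounded functions in $A(X)$; for $f\in A_b(X)$, $\hat f$ is real-valued and continuous on $\mathcal{A}X$. *)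

theory Defs
  imports "HOL-Analysis.Analysis"
begin

text \<open>Functions on a space Z are represented extensionally: as functions that are
  undefined outside topspace Z.\<close>

definition subspace_of_C :: "'a topology \<Rightarrow> ('a \<Rightarrow> real) set \<Rightarrow> bool" where
  "subspace_of_C Z S \<longleftrightarrow>
     (\<forall>f\<in>S. continuous_map Z euclideanreal f \<and> f \<in> extensional (topspace Z)) \<and>
     restrict (\<lambda>_. 0) (topspace Z) \<in> S \<and>
     (\<forall>f\<in>S. \<forall>g\<in>S. \<forall>c::real. restrict (\<lambda>z. f z + c * g z) (topspace Z) \<in> S)"

definition separates_points_closed :: "'a topology \<Rightarrow> ('a \<Rightarrow> real) set \<Rightarrow> bool" where
  "separates_points_closed Z S \<longleftrightarrow>
     (\<forall>z F. z \<in> topspace Z \<and> closedin Z F \<and> z \<notin> F \<longrightarrow>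
        (\<exists>f\<in>S. f z = 1 \<and> (\<forall>y\<in>F. f y = 0)))"

definition precisely_separates_points_closed :: "'a topology \<Rightarrow> ('a \<Rightarrow> real) set \<Rightarrow> bool" where
  "precisely_separates_points_closed Z S \<longleftrightarrow>
     (\<forall>z F. z \<in> topspace Z \<and> closedin Z F \<and> z \<notin> F \<longrightarrow>
        (\<exists>f\<in>S. f z = 1 \<and> (\<forall>y\<in>F. f y = 0) \<and> (\<forall>y\<in>topspace Z. 0 \<le> f y \<and> f y \<le> 1)))"

definition adequate :: "'a topology \<Rightarrow> ('a \<Rightarrow> real) set \<Rightarrow> bool" where
  "adequate X A \<longleftrightarrow>
     subspace_of_C X A \<and>
     separates_points_closed X A \<and>
     (\<forall>c::real. restrict (\<lambda>_. c) (topspace X) \<in> A) \<and>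
     (\<exists>g::real \<Rightarrow> real. continuous_on UNIV g \<and> mono g \<and>
        (\<forall>t\<le>0. g t = 0) \<and> (\<forall>t\<ge>1. g t = 1) \<and>
        (\<forall>f\<in>A. restrict (g \<circ> f) (topspace X) \<in> A)) \<and>
     (\<forall>f\<in>A. \<exists>f1\<in>A. \<exists>f2\<in>A. \<forall>x\<in>topspace X.
        0 \<le> f1 x \<and> 0 \<le> f2 x \<and> f x = f1 x - f2 x)"

definition bounded_part :: "'a topology \<Rightarrow> ('a \<Rightarrow> real) set \<Rightarrow> ('a \<Rightarrow> real) set" where
  "bounded_part X A = {f \<in> A. \<exists>B. \<forall>x\<in>topspace X. \<bar>f x\<bar> \<le> B}"

definition prod_top :: "('a \<Rightarrow> real) set \<Rightarrow> (('a \<Rightarrow> real) \<Rightarrow> ereal) topology" where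
  "prod_top A = product_topology (\<lambda>_. (euclidean :: ereal topology)) A"

definition embed :: "('a \<Rightarrow> real) set \<Rightarrow> 'a \<Rightarrow> (('a \<Rightarrow> real) \<Rightarrow> ereal)" where
  "embed A x = (\<lambda>\<phi>\<in>A. ereal (\<phi> x))"

definition cpt_set :: "'a topology \<Rightarrow> ('a \<Rightarrow> real) set \<Rightarrow> (('a \<Rightarrow> real) \<Rightarrow> ereal) set" where
  "cpt_set X A = (prod_top A) closure_of (embed A ` topspace X)"

definition cpt :: "'a topology \<Rightarrow> ('a \<Rightarrow> real) set \<Rightarrow> (('a \<Rightarrow> real) \<Rightarrow> ereal) topology" where
  "cpt X A = subtopology (prod_top A) (cpt_set X A)"

text \<open>Extension hat f (p) = p(f), real-valued for bounded f.\<close>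
definition hat :: "'a topology \<Rightarrow> ('a \<Rightarrow> real) set \<Rightarrow> ('a \<Rightarrow> real) \<Rightarrow> (('a \<Rightarrow> real) \<Rightarrow> ereal) \<Rightarrow> real" where
  "hat X A f = restrict (\<lambda>p. real_of_ereal (p f)) (cpt_set X A)"

end

theory Submission
  imports Defs
begin


lemma top_prod: "topspace (prod_top A) = PiE A (\<lambda>_. UNIV)"
  unfolding prod_top_def by simp

lemma cpt_sub: "cpt_set X A \<subseteq> topspace (prod_top A)"
  unfolding cpt_set_def by (rule closure_of_subset_topspace)

lemma top_cpt: "topspace (cpt X A) = cpt_set X A"
  unfolding cpt_def using cpt_sub[of X A] by auto

lemma embed_top: "embed A x \<in> topspace (prod_top A)"
  unfolding top_prod embed_def by simp

lemma embed_cpt: "x \<in> topspace X \<Longrightarrow> embed A x \<in> cpt_set X A"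
  unfolding cpt_set_def
  by (rule closure_of_subset[THEN subsetD]) (use embed_top in auto)

lemma embed_app: "\<phi> \<in> A \<Longrightarrow> embed A x \<phi> = ereal (\<phi> x)"
  unfolding embed_def by simp

lemma dense_lemma:
  assumes p: "p \<in> cpt_set X A" and W: "openin (prod_top A) W" "p \<in> W"
    and C: "closedin (prod_top A) C"
    and h: "\<And>x. x \<in> topspace X \<Longrightarrow> embed A x \<in> W \<Longrightarrow> embed A x \<in> C"
  shows "p \<in> C"
proof -
  have "p \<in> (prod_top A) closure_of (W \<inter> embed A ` topspace X)"
    using openin_Int_closure_of_subset[OF W(1)] p W(2) unfolding cpt_set_def by blast
  moreover have "W \<inter> embed A ` topspace X \<subseteq> C" using h by blast
  ultimately show ?thesis
    using closure_of_minimal[OF _ C] by blast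
qed

lemma proj_closed:
  assumes "\<phi> \<in> A" "closed K"
  shows "closedin (prod_top A) {q \<in> topspace (prod_top A). q \<phi> \<in> K}"
proof -
  have "continuous_map (prod_top A) euclidean (\<lambda>q. q \<phi>)"
    unfolding prod_top_def using continuous_map_product_projection[OF assms(1), of "\<lambda>_. euclidean"] by simp
  then show ?thesis using closedin_continuous_map_preimage assms(2) by fastforce
qed

lemma value_lemma:
  assumes p: "p \<in> cpt_set X A" and "\<phi> \<in> A" "closed K"
    and h: "\<And>x. x \<in> topspace X \<Longrightarrow> ereal (\<phi> x) \<in> K"
  shows "p \<phi> \<in> K"
proof -
  have "p \<in> {q \<in> topspace (prod_top A). q \<phi> \<in> K}"
    by (rule dense_lemma[OF p openin_topspace _ proj_closed[OF assms(2,3)]])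
       (use p cpt_sub h assms(2) embed_top[of A] embed_app[OF assms(2)] in auto)
  then show ?thesis by simp
qed




lemma A_ext: "adequate X A \<Longrightarrow> f \<in> A \<Longrightarrow> f \<in> extensional (topspace X)"
  unfolding adequate_def subspace_of_C_def by blast

lemma A_cong:
  assumes "adequate X A" "f \<in> A" "\<And>x. x \<in> topspace X \<Longrightarrow> f x = h x"
  shows "restrict h (topspace X) \<in> A"
proof -
  have "f = restrict h (topspace X)"
    using A_ext[OF assms(1,2)] assms(3) by (auto simp: extensional_def)
  then show ?thesis using assms(2) by simp
qed

lemma A_const: "adequate X A \<Longrightarrow> restrict (\<lambda>_. c) (topspace X) \<in> A"
  unfolding adequate_def by blast

lemma A_lin: "adequate X A \<Longrightarrow> f \<in> A \<Longrightarrow> g \<in> A \<Longrightarrow> restrict (\<lambda>x. f x + c * g x) (topspace X) \<in> A"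
  unfolding adequate_def subspace_of_C_def by blast

lemma A_affine:
  assumes "adequate X A" "\<phi> \<in> A"
  shows "restrict (\<lambda>x. \<alpha> * \<phi> x + \<beta>) (topspace X) \<in> A"
proof -
  have "restrict (\<lambda>x. restrict (\<lambda>_. \<beta>) (topspace X) x + \<alpha> * \<phi> x) (topspace X) \<in> A"
    by (rule A_lin[OF assms(1) A_const[OF assms(1)] assms(2)])
  then show ?thesis
    by (rule A_cong[OF assms(1)]) auto
qed

lemma A_comp:
  assumes "adequate X A" "\<forall>f\<in>A. restrict (g \<circ> f) (topspace X) \<in> A" "h \<in> A"
  shows "restrict (\<lambda>x. g (h x)) (topspace X) \<in> A"
proof -
  have "restrict (g \<circ> h) (topspace X) \<in> A" using assms by blast
  then show ?thesis by (rule A_cong[OF assms(1)]) auto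
qed

lemma A_sum:
  assumes "adequate X A" "finite J" "\<And>j. j \<in> J \<Longrightarrow> \<psi> j \<in> A"
  shows "restrict (\<lambda>x. \<Sum>j\<in>J. \<psi> j x) (topspace X) \<in> A"
  using assms(2,3)
proof (induction J rule: finite_induct)
  case empty
  have "restrict (\<lambda>_. 0::real) (topspace X) = restrict (\<lambda>x. \<Sum>j\<in>{}. \<psi> j x) (topspace X)" by simp
    then show ?case using A_const[OF assms(1), of 0] by metis
next
  case (insert i J)
  have "restrict (\<lambda>x. restrict (\<lambda>x. \<Sum>j\<in>J. \<psi> j x) (topspace X) x + 1 * \<psi> i x) (topspace X) \<in> A"
    by (rule A_lin[OF assms(1)]) (use insert in auto)
  then show ?case
    by (rule A_cong[OF assms(1)]) (use insert in auto)
qed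

lemma hat_cont:
  assumes "f \<in> bounded_part X A"
  shows "continuous_map (cpt X A) euclideanreal (hat X A f)"
proof -
  obtain B where fA: "f \<in> A" and B: "\<And>x. x \<in> topspace X \<Longrightarrow> \<bar>f x\<bar> \<le> B"
    using assms unfolding bounded_part_def by blast
  define S where "S = {ereal (-B)..ereal B}"
  have inS: "q f \<in> S" if "q \<in> cpt_set X A" for q
    unfolding S_def
    by (rule value_lemma[OF that fA]) (use B in \<open>auto simp: abs_le_iff\<close>, metis abs_le_iff minus_le_iff)
  have c1: "continuous_map (cpt X A) (subtopology euclidean S) (\<lambda>q. q f)"
  proof (rule continuous_map_into_subtopology)
    have "continuous_map (prod_top A) euclidean (\<lambda>q. q f)"
      unfolding prod_top_def using continuous_map_product_projection[OF fA, of "\<lambda>_. euclidean"] by simp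
    then show "continuous_map (cpt X A) euclidean (\<lambda>q. q f)"
      unfolding cpt_def by (rule continuous_map_from_subtopology)
    show "(\<lambda>q. q f) \<in> topspace (cpt X A) \<rightarrow> S" using inS top_cpt by blast
  qed
  have "continuous_on S real_of_ereal"
  proof (rule continuous_at_imp_continuous_on, rule ballI)
    fix x assume "x \<in> S"
    then have "\<bar>x\<bar> \<noteq> \<infinity>" unfolding S_def by auto
    then show "isCont real_of_ereal x" by (rule continuous_at_of_ereal)
  qed
  then have c2: "continuous_map (subtopology euclidean S) euclideanreal real_of_ereal" by simp
  have "continuous_map (cpt X A) euclideanreal (\<lambda>q. real_of_ereal (q f))"
    using continuous_map_compose[OF c1 c2] by (simp add: o_def)
  then show ?thesis
    by (rule continuous_map_eq) (simp add: hat_def top_cpt)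
qed




lemma hat_embed: "f \<in> A \<Longrightarrow> x \<in> topspace X \<Longrightarrow> hat X A f (embed A x) = f x"
  by (simp add: hat_def embed_cpt embed_app)

lemma in_cpt_closure:
  assumes "z \<in> cpt_set X A"
  shows "z \<in> (cpt X A) closure_of (embed A ` topspace X)"
proof -
  have "cpt_set X A \<inter> embed A ` topspace X = embed A ` topspace X"
    using embed_cpt[of _ X A] by blast
  then show ?thesis using assms
    unfolding cpt_def closure_of_subtopology by (simp add: cpt_set_def)
qed

lemma part1:
  assumes ad: "adequate X A"
  shows "subspace_of_C (cpt X A) (hat X A ` bounded_part X A)"
  unfolding subspace_of_C_def
proof (intro conjI ballI allI)
  fix F assume "F \<in> hat X A ` bounded_part X A"
  then obtain f where f: "f \<in> bounded_part X A" "F = hat X A f" by blast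
  show "continuous_map (cpt X A) euclideanreal F" unfolding f(2) by (rule hat_cont[OF f(1)])
  show "F \<in> extensional (topspace (cpt X A))" unfolding f top_cpt hat_def by simp
next
  define z0 where "z0 = restrict (\<lambda>_. 0::real) (topspace X)"
  have z0A: "z0 \<in> A" unfolding z0_def by (rule A_const[OF ad])
  have "z0 \<in> bounded_part X A" unfolding bounded_part_def using z0A
    by (auto simp: z0_def)
  moreover have "hat X A z0 = restrict (\<lambda>_. 0) (topspace (cpt X A))"
  proof -
    have "q z0 \<in> {0}" if "q \<in> cpt_set X A" for q
      by (rule value_lemma[OF that z0A]) (auto simp: z0_def)
    then show ?thesis unfolding hat_def top_cpt by (intro restrict_ext) (metis real_of_ereal_0 singletonD)
  qed
  ultimately show "restrict (\<lambda>_. 0) (topspace (cpt X A)) \<in> hat X A ` bounded_part X A"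
    by (metis image_eqI)
next
  fix F G and c :: real
  assume "F \<in> hat X A ` bounded_part X A" "G \<in> hat X A ` bounded_part X A"
  then obtain f g where f: "f \<in> bounded_part X A" "F = hat X A f"
    and g: "g \<in> bounded_part X A" "G = hat X A g" by blast
  obtain Bf where fA: "f \<in> A" and Bf: "\<And>x. x \<in> topspace X \<Longrightarrow> \<bar>f x\<bar> \<le> Bf"
    using f unfolding bounded_part_def by blast
  obtain Bg where gA: "g \<in> A" and Bg: "\<And>x. x \<in> topspace X \<Longrightarrow> \<bar>g x\<bar> \<le> Bg"
    using g unfolding bounded_part_def by blast
  define h where "h = restrict (\<lambda>x. f x + c * g x) (topspace X)"
  have hA: "h \<in> A" unfolding h_def by (rule A_lin[OF ad fA gA])
  have "\<bar>h x\<bar> \<le> Bf + \<bar>c\<bar> * Bg" if "x \<in> topspace X" for x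
  proof -
    have "\<bar>c * g x\<bar> \<le> \<bar>c\<bar> * Bg" using Bg[OF that] by (simp add: abs_mult mult_left_mono)
    then show ?thesis using Bf[OF that] that by (simp add: h_def)
  qed
  then have hb: "h \<in> bounded_part X A" unfolding bounded_part_def using hA by blast
  have cf: "continuous_map (cpt X A) euclideanreal (hat X A f)" by (rule hat_cont[OF f(1)])
  have cg: "continuous_map (cpt X A) euclideanreal (hat X A g)" by (rule hat_cont[OF g(1)])
  have ch: "continuous_map (cpt X A) euclideanreal (hat X A h)" by (rule hat_cont[OF hb])
  have "hat X A h = restrict (\<lambda>z. F z + c * G z) (topspace (cpt X A))"
  proof (rule ext)
    fix z
    show "hat X A h z = restrict (\<lambda>z. F z + c * G z) (topspace (cpt X A)) z"
    proof (cases "z \<in> cpt_set X A")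
      case True
      have "hat X A h z = hat X A f z + c * hat X A g z"
      proof (rule forall_in_closure_of_eq[OF in_cpt_closure[OF True]])
        show "Hausdorff_space (euclideanreal)" by simp
        show "continuous_map (cpt X A) euclideanreal (hat X A h)" by (rule ch)
        show "continuous_map (cpt X A) euclideanreal (\<lambda>z. hat X A f z + c * hat X A g z)"
          by (intro continuous_intros cf cg)
        fix y assume "y \<in> embed A ` topspace X"
        then obtain x where "x \<in> topspace X" "y = embed A x" by blast
        then show "hat X A h y = hat X A f y + c * hat X A g y"
          using hat_embed[OF hA] hat_embed[OF fA] hat_embed[OF gA] by (simp add: h_def)
      qed
      then show ?thesis using True f g by (simp add: top_cpt)
    next
      case False
      then show ?thesis by (simp add: top_cpt hat_def)
    qed
  qed
  then show "restrict (\<lambda>z. F z + c * G z) (topspace (cpt X A)) \<in> hat X A ` bounded_part X A"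
    using hb by (metis image_eqI)
qed




locale gfun =
  fixes X :: "'a topology" and A and g :: "real \<Rightarrow> real"
  assumes ad: "adequate X A"
    and gm: "mono g" and g0: "\<And>t. t \<le> 0 \<Longrightarrow> g t = 0" and g1: "\<And>t. t \<ge> 1 \<Longrightarrow> g t = 1"
    and gA: "\<forall>f\<in>A. restrict (g \<circ> f) (topspace X) \<in> A"
begin

lemma g_ge0: "0 \<le> g t"
proof (cases "t \<le> 0")
  case True then show ?thesis using g0 by simp
next
  case False then have "g 0 \<le> g t" using gm by (simp add: monoD)
  then show ?thesis using g0[of 0] by simp
qed

lemma g_le1: "g t \<le> 1"
proof (cases "t \<ge> 1")
  case True then show ?thesis using g1 by simp
next
  case False then have "g t \<le> g 1" using gm by (simp add: monoD)
  then show ?thesis using g1[of 1] by simp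
qed

lemma memG:
  assumes "\<phi> \<in> A" "d > 0"
  shows "restrict (\<lambda>x. g ((\<phi> x - a) / d)) (topspace X) \<in> A"
proof -
  have "restrict (\<lambda>x. (1/d) * \<phi> x + (- a / d)) (topspace X) \<in> A"
    by (rule A_affine[OF ad assms(1)])
  then have "restrict (\<lambda>x. g (restrict (\<lambda>x. (1/d) * \<phi> x + (- a / d)) (topspace X) x)) (topspace X) \<in> A"
    by (rule A_comp[OF ad gA])
  then show ?thesis
    by (rule A_cong[OF ad]) (simp add: diff_divide_distrib)
qed

lemma memL:
  assumes "\<phi> \<in> A" "d > 0"
  shows "restrict (\<lambda>x. 1 - g ((\<phi> x - a) / d)) (topspace X) \<in> A"
proof -
  have "restrict (\<lambda>x. restrict (\<lambda>_. 1) (topspace X) x + (-1) * restrict (\<lambda>x. g ((\<phi> x - a) / d)) (topspace X) x) (topspace X) \<in> A"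
    by (rule A_lin[OF ad A_const[OF ad] memG[OF assms]])
  then show ?thesis
    by (rule A_cong[OF ad]) simp
qed

lemma test_fun:
  assumes \<phi>: "\<phi> \<in> A" and U: "open U" "e0 \<in> U"
  shows "\<exists>\<psi> V W. \<psi> \<in> A \<and> open V \<and> e0 \<in> V \<and> open W \<and> - U \<subseteq> W \<and>
           (\<forall>x\<in>topspace X. 0 \<le> \<psi> x) \<and>
           (\<forall>x\<in>topspace X. ereal (\<phi> x) \<in> V \<longrightarrow> \<psi> x = 0) \<and>
           (\<forall>x\<in>topspace X. ereal (\<phi> x) \<in> W \<longrightarrow> 1 \<le> \<psi> x)"
proof (cases e0)
  case PInf
  obtain M where M: "{ereal M<..} \<subseteq> U" using open_PInfty2[OF U(1)] PInf U(2) by blast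
  let ?\<psi> = "restrict (\<lambda>x. 1 - g ((\<phi> x - (M+1)) / 1)) (topspace X)"
  show ?thesis
  proof (intro exI conjI ballI impI)
    show "?\<psi> \<in> A" by (rule memL[OF \<phi>]) simp
    show "open {ereal (M+2)<..}" by simp
    show "e0 \<in> {ereal (M+2)<..}" using PInf by simp
    show "open {..<ereal (M+1)}" by simp
    show "- U \<subseteq> {..<ereal (M+1)}"
    proof
      fix y assume "y \<in> - U"
      then have "\<not> ereal M < y" using M by auto
      then show "y \<in> {..<ereal (M+1)}" by (cases y) auto
    qed
    fix x assume x: "x \<in> topspace X"
    show "0 \<le> ?\<psi> x" using x g_le1 by simp
    { assume "ereal (\<phi> x) \<in> {ereal (M+2)<..}"
      then show "?\<psi> x = 0" using x g1 by simp }
    { assume "ereal (\<phi> x) \<in> {..<ereal (M+1)}"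
      then show "1 \<le> ?\<psi> x" using x g0 by simp }
  qed
next
  case MInf
  obtain M where M: "{..<ereal M} \<subseteq> U" using open_MInfty2[OF U(1)] MInf U(2) by blast
  let ?\<psi> = "restrict (\<lambda>x. g ((\<phi> x - (M-2)) / 1)) (topspace X)"
  show ?thesis
  proof (intro exI conjI ballI impI)
    show "?\<psi> \<in> A" by (rule memG[OF \<phi>]) simp
    show "open {..<ereal (M-2)}" by simp
    show "e0 \<in> {..<ereal (M-2)}" using MInf by simp
    show "open {ereal (M-1)<..}" by simp
    show "- U \<subseteq> {ereal (M-1)<..}"
    proof
      fix y assume "y \<in> - U"
      then have "\<not> y < ereal M" using M by auto
      then show "y \<in> {ereal (M-1)<..}" by (cases y) auto
    qed
    fix x assume x: "x \<in> topspace X"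
    show "0 \<le> ?\<psi> x" using x g_ge0 by simp
    { assume "ereal (\<phi> x) \<in> {..<ereal (M-2)}"
      then show "?\<psi> x = 0" using x g0 by simp }
    { assume "ereal (\<phi> x) \<in> {ereal (M-1)<..}"
      then show "1 \<le> ?\<psi> x" using x g1 by simp }
  qed
next
  case (real r)
  obtain a b where "open (ereal -` U)" using ereal_openE[OF U(1)] by metis
  moreover have "r \<in> ereal -` U" using U real by simp
  ultimately obtain e where e: "e > 0" "ball r e \<subseteq> ereal -` U"
    using open_contains_ball by blast
  let ?L = "restrict (\<lambda>x. 1 - g ((\<phi> x - (r - e/2)) / (e/4))) (topspace X)"
  let ?R = "restrict (\<lambda>x. g ((\<phi> x - (r + e/4)) / (e/4))) (topspace X)"
  let ?\<psi> = "restrict (\<lambda>x. ?L x + 1 * ?R x) (topspace X)"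
  let ?V = "{ereal (r - e/4)<..<ereal (r + e/4)}"
  let ?W = "{..<ereal (r - e/2)} \<union> {ereal (r + e/2)<..}"
  show ?thesis
  proof (intro exI conjI ballI impI)
    show "?\<psi> \<in> A" by (rule A_lin[OF ad memL[OF \<phi>] memG[OF \<phi>]]) (use e in auto)
    show "open ?V" by simp
    show "e0 \<in> ?V" using real e by simp
    show "open ?W" by (intro open_Un) simp_all
    show "- U \<subseteq> ?W"
    proof
      fix y assume y: "y \<in> - U"
      show "y \<in> ?W"
      proof (cases y)
        case (real s)
        then have "s \<notin> ball r e" using e y by auto
        then have "s \<le> r - e \<or> s \<ge> r + e" by (auto simp: dist_real_def)
        then show ?thesis using real e by auto
      qed auto
    qed
    fix x assume x: "x \<in> topspace X"
    show "0 \<le> ?\<psi> x" using x g_ge0 g_le1 by (simp add: add_nonneg_nonneg)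
    { assume "ereal (\<phi> x) \<in> ?V"
      then have h: "r - e/4 < \<phi> x" "\<phi> x < r + e/4" by auto
      have "(\<phi> x - (r - e/2)) / (e/4) \<ge> 1" using h e by (simp add: field_simps)
      moreover have "(\<phi> x - (r + e/4)) / (e/4) \<le> 0" using h e by (simp add: field_simps)
      ultimately show "?\<psi> x = 0" using x g0 g1 by simp }
    { assume "ereal (\<phi> x) \<in> ?W"
      then have "\<phi> x < r - e/2 \<or> \<phi> x > r + e/2" by auto
      then show "1 \<le> ?\<psi> x"
      proof
        assume h: "\<phi> x < r - e/2"
        have "(\<phi> x - (r - e/2)) / (e/4) \<le> 0" using h e by (simp add: field_simps)
        then show ?thesis using x g0 g_ge0 by simp
      next
        assume h: "\<phi> x > r + e/2"
        have "(\<phi> x - (r + e/4)) / (e/4) \<ge> 1" using h e by (simp add: field_simps)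
        then show ?thesis using x g1 g_le1 g_ge0[of "(\<phi> x - (r - e/2)) / (e/4)"] by simp
      qed }
  qed
qed

end




context gfun begin

lemma part2: "precisely_separates_points_closed (cpt X A) (hat X A ` bounded_part X A)"
  unfolding precisely_separates_points_closed_def
proof (intro allI impI)
  fix p F
  assume asm: "p \<in> topspace (cpt X A) \<and> closedin (cpt X A) F \<and> p \<notin> F"
  then have p: "p \<in> cpt_set X A" and Fc: "closedin (cpt X A) F" and pF: "p \<notin> F"
    using top_cpt by auto
  have Fsub: "F \<subseteq> cpt_set X A" using closedin_subset[OF Fc] top_cpt by auto
  have "openin (cpt X A) (cpt_set X A - F)"
    using Fc top_cpt unfolding closedin_def by metis
  then obtain Op where Op: "openin (prod_top A) Op" "cpt_set X A - F = Op \<inter> cpt_set X A"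
    unfolding cpt_def openin_subtopology by blast
  have pO: "p \<in> Op" using Op p pF by blast
  obtain U where U: "finite {i \<in> A. U i \<noteq> UNIV}" "\<forall>i\<in>A. open (U i)"
      "p \<in> PiE A U" "PiE A U \<subseteq> Op"
    using Op(1) pO unfolding prod_top_def openin_product_topology_alt by force
  define J where "J = {i \<in> A. U i \<noteq> UNIV}"
  have finJ: "finite J" using U(1) J_def by simp
  have "\<forall>j\<in>J. \<exists>\<psi> V W. \<psi> \<in> A \<and> open V \<and> p j \<in> V \<and> open W \<and> - U j \<subseteq> W \<and>
           (\<forall>x\<in>topspace X. 0 \<le> \<psi> x) \<and>
           (\<forall>x\<in>topspace X. ereal (j x) \<in> V \<longrightarrow> \<psi> x = 0) \<and>
           (\<forall>x\<in>topspace X. ereal (j x) \<in> W \<longrightarrow> 1 \<le> \<psi> x)"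
  proof
    fix j assume j: "j \<in> J"
    show "\<exists>\<psi> V W. \<psi> \<in> A \<and> open V \<and> p j \<in> V \<and> open W \<and> - U j \<subseteq> W \<and>
           (\<forall>x\<in>topspace X. 0 \<le> \<psi> x) \<and>
           (\<forall>x\<in>topspace X. ereal (j x) \<in> V \<longrightarrow> \<psi> x = 0) \<and>
           (\<forall>x\<in>topspace X. ereal (j x) \<in> W \<longrightarrow> 1 \<le> \<psi> x)"
      by (rule test_fun) (use j J_def U(2,3) in \<open>auto simp: PiE_iff\<close>)
  qed
  then obtain \<psi> V W where PVW: "\<forall>j\<in>J. \<psi> j \<in> A \<and> open (V j) \<and> p j \<in> V j \<and> open (W j) \<and> - U j \<subseteq> W j \<and>
           (\<forall>x\<in>topspace X. 0 \<le> \<psi> j x) \<and>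
           (\<forall>x\<in>topspace X. ereal (j x) \<in> V j \<longrightarrow> \<psi> j x = 0) \<and>
           (\<forall>x\<in>topspace X. ereal (j x) \<in> W j \<longrightarrow> 1 \<le> \<psi> j x)"
    by metis
  define k where "k = restrict (\<lambda>x. \<Sum>j\<in>J. \<psi> j x) (topspace X)"
  have kA: "k \<in> A" unfolding k_def by (rule A_sum[OF ad finJ]) (use PVW in blast)
  define f where "f = restrict (\<lambda>x. 1 - g (k x)) (topspace X)"
  have "restrict (\<lambda>x. restrict (\<lambda>_. 1) (topspace X) x + (-1) * restrict (\<lambda>x. g (k x)) (topspace X) x) (topspace X) \<in> A"
    by (rule A_lin[OF ad A_const[OF ad] A_comp[OF ad gA kA]])
  then have fA: "f \<in> A" unfolding f_def by (rule A_cong[OF ad]) simp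
  have f01: "f x \<in> {0..1}" if "x \<in> topspace X" for x
    using that g_ge0 g_le1 by (simp add: f_def)
  have fb: "f \<in> bounded_part X A"
    unfolding bounded_part_def using fA f01 by (intro CollectI conjI exI[of _ 1]) auto
  have fq01: "q f \<in> {0..1}" if "q \<in> cpt_set X A" for q
    by (rule value_lemma[OF that fA]) (use f01 in auto)
  define W0 where "W0 = PiE A (\<lambda>i. if i \<in> J then V i else UNIV)"
  have "openin (prod_top A) W0"
    unfolding W0_def prod_top_def openin_PiE_gen
    by (rule disjI2, intro conjI ballI)
       (auto intro: finite_subset[OF _ finJ] simp: PVW)
  moreover have "p \<in> W0"
    using cpt_sub[of X A] p PVW unfolding W0_def top_prod by (auto simp: PiE_iff)
  ultimately have "p \<in> {q \<in> topspace (prod_top A). q f \<in> {1}}"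
  proof (rule dense_lemma[OF p _ _ proj_closed[OF fA]])
    fix x assume x: "x \<in> topspace X" and ex: "embed A x \<in> W0"
    have "\<psi> j x = 0" if "j \<in> J" for j
    proof -
      have jA: "j \<in> A" using that J_def by blast
      have "embed A x j \<in> (if j \<in> J then V j else UNIV)" using ex jA unfolding W0_def by (auto simp: PiE_iff)
      then have "embed A x j \<in> V j" using that by simp
      then show ?thesis using PVW that x J_def embed_app[of j A x] by auto
    qed
    then have "k x = 0" using x by (simp add: k_def)
    then have "f x = 1" using x g0 by (simp add: f_def)
    then show "embed A x \<in> {q \<in> topspace (prod_top A). q f \<in> {1}}"
      using embed_top embed_app[OF fA] by simp
  qed simp
  then have pf: "p f = 1" by simp
  have qf: "q f = 0" if qF: "q \<in> F" for q
  proof -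
    have q: "q \<in> cpt_set X A" using qF Fsub by blast
    have "q \<notin> Op" using qF Op(2) q by blast
    then have "q \<notin> PiE A U" using U(4) by blast
    moreover have "q \<in> PiE A (\<lambda>_. UNIV)" using q cpt_sub top_prod by blast
    ultimately obtain j where jA: "j \<in> A" and qj: "q j \<notin> U j" by (auto simp: PiE_iff)
    then have jJ: "j \<in> J" unfolding J_def by auto
    have qW: "q j \<in> W j" using qj PVW jJ by blast
    have "openin (prod_top A) {q \<in> topspace (prod_top A). q j \<in> W j}"
    proof -
      have "continuous_map (prod_top A) euclidean (\<lambda>q. q j)"
        unfolding prod_top_def using continuous_map_product_projection[OF jA, of "\<lambda>_. euclidean"] by simp
      then show ?thesis using openin_continuous_map_preimage PVW jJ by fastforce
    qed
    then have "q \<in> {q \<in> topspace (prod_top A). q f \<in> {0}}"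
    proof (rule dense_lemma[OF q _ _ proj_closed[OF fA]])
      show "q \<in> {q \<in> topspace (prod_top A). q j \<in> W j}" using q cpt_sub qW by blast
      fix x assume x: "x \<in> topspace X" and ex: "embed A x \<in> {q \<in> topspace (prod_top A). q j \<in> W j}"
      then have "ereal (j x) \<in> W j" using embed_app[OF jA] by simp
      then have "1 \<le> \<psi> j x" using PVW jJ x by blast
      moreover have "\<psi> j x \<le> (\<Sum>i\<in>J. \<psi> i x)"
        by (rule member_le_sum) (use jJ finJ PVW x in auto)
      ultimately have "1 \<le> k x" using x by (simp add: k_def)
      then have "f x = 0" using x g1 by (simp add: f_def)
      then show "embed A x \<in> {q \<in> topspace (prod_top A). q f \<in> {0}}"
        using embed_top embed_app[OF fA] by simp
    qed simp
    then show ?thesis by simp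
  qed
  show "\<exists>h\<in>hat X A ` bounded_part X A. h p = 1 \<and> (\<forall>y\<in>F. h y = 0) \<and>
          (\<forall>y\<in>topspace (cpt X A). 0 \<le> h y \<and> h y \<le> 1)"
  proof (rule bexI[of _ "hat X A f"], intro conjI ballI)
    show "hat X A f p = 1" using p pf by (simp add: hat_def)
    fix y
    { assume yF: "y \<in> F" then have "y f = 0" by (rule qf)
      then show "hat X A f y = 0" using yF Fsub by (auto simp: hat_def) }
    { assume "y \<in> topspace (cpt X A)"
      then have y: "y \<in> cpt_set X A" using top_cpt by blast
      then have "y f \<in> {0..1}" by (rule fq01)
      then obtain r where "y f = ereal r" "0 \<le> r" "r \<le> 1" by (cases "y f") auto
      then show "0 \<le> hat X A f y" "hat X A f y \<le> 1" using y by (auto simp: hat_def) }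
  qed (use fb in auto)
qed

end


theorem lemma3p3:
  fixes X :: "'a topology" and A :: "('a \<Rightarrow> real) set"
  assumes "completely_regular_space X" and "Hausdorff_space X"
    and "adequate X A"
  shows "subspace_of_C (cpt X A) (hat X A ` bounded_part X A)
       \<and> precisely_separates_points_closed (cpt X A) (hat X A ` bounded_part X A)"
proof
  show "subspace_of_C (cpt X A) (hat X A ` bounded_part X A)" by (rule part1[OF assms(3)])
  obtain g where g: "mono g" "\<forall>t\<le>0. g t = 0" "\<forall>t\<ge>1. g t = 1"
      "\<forall>f\<in>A. restrict (g \<circ> f) (topspace X) \<in> A"
    using assms(3) unfolding adequate_def by blast
  interpret gfun X A g
    by unfold_locales (use assms(3) g in auto)
  show "precisely_separates_points_closed (cpt X A) (hat X A ` bounded_part X A)"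
    by (rule part2)
qed

end
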